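(* Consider the D2EAL algorithm (without periodic reset) described in the context with horizon $T\ge1$ and $\eta_\alpha,\eta_w>0$. Assume (Assumption 2) that $|l(x_1,y)-l(x_2,y)|\le L_1\|x_1-x_2\|$ for all $x_1,x_2\in\mathcal A$, $y\in\mathcal Y$, for some constant $L_1\ge0$; and (Assumption 3) that there are nonnegative numbers $\delta_1,\dots,\delta_T$ with $\|f_{t,i}-f_{t,j}\|\le\delta_t$ for all $i,j\in[N]$ and $t=1,\dots,T$. Let $\Delta_o\ge\sum_{t=1}^T\delta_t$ and let $i^*\in\arg\min_{j\in[N]}L_{T,j}$. Then for every $i\in[N]$, $$R_i^{GI}(T):=\bar L_{T,i}-L_{T,i^*}\le\frac{\eta_\alpha T}{8}+\frac{\log2}{\eta_\alpha}+L_1\Delta_o.$$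
   Context: Setup. There are $N\ge 1$ agents indexed by $i\in[N]$ and a horizon $T\ge1$. The outcome space $\mathcal Y$ and action space $\mathcal A$ are convex subsets of $\mathbb R^n$, $\|\cdot\|$ is the Euclidean norm. The loss $l:\mathcal A\times\mathcal Y\to[0,1]$ is convex in its first argument. The target sequence $y_1,\dots,y_T\in\mathcal Y$ is arbitrary. For each agent $i$ and each $t\ge1$, an "expert" supplies an arbitrary prediction $f_{t,i}\in\mathcal A$ of $y_t$ (available at time $t-1$). Agents communicate over a time-varying undirected graph; $\Omega_i(t)$ is the set of neighbours of agent $i$ at time $t$, $\Lambda_i(t):=\Omega_i(t)\cup\{i\}$ and $d_i(t):=|\Lambda_i(t)|$. D2EAL (without periodic reset). Initialize $\hat f_{0,i}=f_{1,i}$, $\hat\alpha_i(0)=\hat\alpha'_i(0)=\hat w_{ii}(0)=1$ for all $i$. For $t=0,1,\dots,T-1$, each agent $i$ computes: $\alpha_i(t)=\hat\alpha_i(t)/(\hat\alpha_i(t)+\hat\alpha'_i(t))$; individual prediction $\bar f_{t+1,i}=\alpha_i(t)f_{t+1,i}+(1-\alpha_i(t))\hat f_{t,i}$; social weights $w_{ij}(t)=\hat w_{jj}(t)/\sum_{j'\in\Lambda_i(t)}\hat w_{j'j'}(t)$ for $j\in\Lambda_i(t)$ and $w_{ij}(t)=0$ otherwise; social prediction $\hat f_{t+1,i}=\sum_{j\in\Lambda_i(t)}w_{ij}(t)\bar f_{t+1,j}$. After $y_{t+1}$ is revealed, define the losses $l_{t+1,i}=l(f_{t+1,i},y_{t+1})$,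 $\hat l^-_{t+1,i}=l(\hat f_{t,i},y_{t+1})$, $\bar l_{t+1,i}=l(\bar f_{t+1,i},y_{t+1})$, $\hat l_{t+1,i}=l(\hat f_{t+1,i},y_{t+1})$, and update $\hat\alpha_i(t+1)=\hat\alpha_i(t)e^{-\eta_\alpha l_{t+1,i}}$, $\hat\alpha'_i(t+1)=\hat\alpha'_i(t)e^{-\eta_\alpha \hat l^-_{t+1,i}}$, $\hat w_{ii}(t+1)=\hat w_{ii}(t)e^{-\eta_w\bar l_{t+1,i}}$. Cumulative losses: $L_{T,i}=\sum_{t=1}^T l_{t,i}$, $\hat L^-_{T,i}=\sum_{t=1}^T\hat l^-_{t,i}$, $\bar L_{T,i}=\sum_{t=1}^T\bar l_{t,i}$, $\hat L_{T,i}=\sum_{t=1}^T\hat l_{t,i}$. *)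

theory Defs
  imports "HOL-Analysis.Analysis"
begin

text \<open>Agents are the naturals i < N. Time-varying neighbour sets: Om i t is the set
of neighbours of agent i at (communication) time t, and Lambda i t = insert i (Om i t).
Experts: f t i is the prediction of y t supplied to agent i (t \<ge> 1).
The state of the algorithm after step t (t = 0,1,...) is a tuple
(alpha_hat, alpha_hat', w_hat_ii, f_hat_t) of functions of the agent index.\<close>

type_synonym 'a d2eal_state = "(nat \<Rightarrow> real) \<times> (nat \<Rightarrow> real) \<times> (nat \<Rightarrow> real) \<times> (nat \<Rightarrow> 'a)"

definition Lam :: "(nat \<Rightarrow> nat \<Rightarrow> nat set) \<Rightarrow> nat \<Rightarrow> nat \<Rightarrow> nat set" where
  "Lam Om i t = insert i (Om i t)"

definition d2_alpha :: "'a d2eal_state \<Rightarrow> nat \<Rightarrow> real" where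
  "d2_alpha st i = (case st of (ah, ah', wh, fh) \<Rightarrow> ah i / (ah i + ah' i))"

text \<open>individual prediction bar f_{t+1,i} computed from the state at time t\<close>
definition d2_fbar_next :: "(nat \<Rightarrow> nat \<Rightarrow> 'a::real_vector) \<Rightarrow> nat \<Rightarrow> 'a d2eal_state \<Rightarrow> nat \<Rightarrow> 'a" where
  "d2_fbar_next f t st i = (case st of (ah, ah', wh, fh) \<Rightarrow>
      d2_alpha st i *\<^sub>R f (t+1) i + (1 - d2_alpha st i) *\<^sub>R fh i)"

definition d2_w :: "(nat \<Rightarrow> nat \<Rightarrow> nat set) \<Rightarrow> nat \<Rightarrow> 'a d2eal_state \<Rightarrow> nat \<Rightarrow> nat \<Rightarrow> real" where
  "d2_w Om t st i j = (case st of (ah, ah', wh, fh) \<Rightarrow>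
      (if j \<in> Lam Om i t then wh j / (\<Sum>j'\<in>Lam Om i t. wh j') else 0))"

definition d2_fhat_next :: "(nat \<Rightarrow> nat \<Rightarrow> 'a::real_vector) \<Rightarrow> (nat \<Rightarrow> nat \<Rightarrow> nat set) \<Rightarrow> nat \<Rightarrow> 'a d2eal_state \<Rightarrow> nat \<Rightarrow> 'a" where
  "d2_fhat_next f Om t st i = (\<Sum>j\<in>Lam Om i t. d2_w Om t st i j *\<^sub>R d2_fbar_next f t st j)"

fun d2eal_state :: "('a::real_vector \<Rightarrow> 'a \<Rightarrow> real) \<Rightarrow> (nat \<Rightarrow> nat \<Rightarrow> 'a) \<Rightarrow> (nat \<Rightarrow> 'a)
    \<Rightarrow> (nat \<Rightarrow> nat \<Rightarrow> nat set) \<Rightarrow> real \<Rightarrow> real \<Rightarrow> nat \<Rightarrow> 'a d2eal_state" where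
  "d2eal_state l f y Om ea ew 0 = ((\<lambda>i. 1), (\<lambda>i. 1), (\<lambda>i. 1), (\<lambda>i. f 1 i))"
| "d2eal_state l f y Om ea ew (Suc t) =
     (let st = d2eal_state l f y Om ea ew t in
      case st of (ah, ah', wh, fh) \<Rightarrow>
        ((\<lambda>i. ah i * exp (- ea * l (f (t+1) i) (y (t+1)))),
         (\<lambda>i. ah' i * exp (- ea * l (fh i) (y (t+1)))),
         (\<lambda>i. wh i * exp (- ew * l (d2_fbar_next f t st i) (y (t+1)))),
         (\<lambda>i. d2_fhat_next f Om t st i)))"

text \<open>bar f_{t,i} for t \<ge> 1 (computed at step t-1)\<close>
definition d2_fbar :: "('a::real_vector \<Rightarrow> 'a \<Rightarrow> real) \<Rightarrow> (nat \<Rightarrow> nat \<Rightarrow> 'a) \<Rightarrow> (nat \<Rightarrow> 'a)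
    \<Rightarrow> (nat \<Rightarrow> nat \<Rightarrow> nat set) \<Rightarrow> real \<Rightarrow> real \<Rightarrow> nat \<Rightarrow> nat \<Rightarrow> 'a" where
  "d2_fbar l f y Om ea ew t i = d2_fbar_next f (t - 1) (d2eal_state l f y Om ea ew (t - 1)) i"

definition cumL :: "('a \<Rightarrow> 'a \<Rightarrow> real) \<Rightarrow> (nat \<Rightarrow> nat \<Rightarrow> 'a) \<Rightarrow> (nat \<Rightarrow> 'a) \<Rightarrow> nat \<Rightarrow> nat \<Rightarrow> real" where
  "cumL l f y T i = (\<Sum>t=1..T. l (f t i) (y t))"

definition cumLbar :: "('a::real_vector \<Rightarrow> 'a \<Rightarrow> real) \<Rightarrow> (nat \<Rightarrow> nat \<Rightarrow> 'a) \<Rightarrow> (nat \<Rightarrow> 'a)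
    \<Rightarrow> (nat \<Rightarrow> nat \<Rightarrow> nat set) \<Rightarrow> real \<Rightarrow> real \<Rightarrow> nat \<Rightarrow> nat \<Rightarrow> real" where
  "cumLbar l f y Om ea ew T i = (\<Sum>t=1..T. l (d2_fbar l f y Om ea ew t i) (y t))"

end

theory Submission
  imports Defs "HOL-Probability.Hoeffding"
begin


lemma exp_chord:
  fixes u e :: real assumes "0 \<le> u" "u \<le> 1"
  shows "exp (-e*u) \<le> 1 - u + u * exp (-e)"
proof -
  have "exp ((1-u) *\<^sub>R 0 + u *\<^sub>R (-e)) \<le> (1-u) * exp 0 + u * exp (-e)"
    by (rule convex_onD[OF exp_convex]) (use assms in auto)
  thus ?thesis by (simp add: mult.commute)
qed

lemma hoeff2:
  fixes a x z e :: real
  assumes "0\<le>a" "a\<le>1" "0\<le>x" "x\<le>1" "0\<le>z" "z\<le>1" "e>0"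
  shows "a*exp(-e*x) + (1-a)*exp(-e*z) \<le> exp(-e*(a*x+(1-a)*z) + e^2/8)"
proof -
  define m where "m = a*x+(1-a)*z"
  have m0: "0 \<le> m" unfolding m_def using assms by simp
  have m1: "m \<le> 1" unfolding m_def using assms
    by (smt (verit, best) mult_left_le mult_nonneg_nonneg)
  have "a*exp(-e*x) + (1-a)*exp(-e*z) \<le> a*(1 - x + x*exp(-e)) + (1-a)*(1 - z + z*exp(-e))"
    using exp_chord[of x e] exp_chord[of z e] assms
    by (intro add_mono mult_left_mono) auto
  also have "\<dots> = 1 - m + m*exp(-e)" unfolding m_def by (simp add: algebra_simps)
  also have "\<dots> = exp(-e) * (1 + (1-m)*(exp e - 1))"
    by (simp add: algebra_simps exp_minus field_simps)
  also have "\<dots> \<le> exp(-e) * exp (e^2/8 + e*(1-m))"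
  proof (rule mult_left_mono)
    have q: "1 + (1-m)*(exp e - 1) > 0" using m1 assms
      by (smt (verit) exp_ge_add_one_self mult_nonneg_nonneg)
    have "-e*(1-m) + ln (1 + (1-m)*(exp e - 1)) \<le> e^2/8"
      by (rule Hoeffdings_lemma_aux) (use assms m1 in auto)
    hence "ln (1 + (1-m)*(exp e - 1)) \<le> e^2/8 + e*(1-m)" by simp
    thus "1 + (1-m)*(exp e - 1) \<le> exp (e^2/8 + e*(1-m))"
      using q by (metis exp_le_cancel_iff exp_ln)
  qed simp
  also have "\<dots> = exp(-e*m + e^2/8)" by (subst mult_exp_exp) (simp add: algebra_simps)
  finally show ?thesis unfolding m_def .
qed


lemma st_Suc:
  fixes l :: "'a::real_vector \<Rightarrow> 'a \<Rightarrow> real"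
  shows "fst (d2eal_state l f y Om ea ew (Suc t)) i = fst (d2eal_state l f y Om ea ew t) i * exp (- ea * l (f (t+1) i) (y (t+1)))"
    and "fst (snd (d2eal_state l f y Om ea ew (Suc t))) i = fst (snd (d2eal_state l f y Om ea ew t)) i * exp (- ea * l (snd (snd (snd (d2eal_state l f y Om ea ew t))) i) (y (t+1)))"
    and "fst (snd (snd (d2eal_state l f y Om ea ew (Suc t)))) i = fst (snd (snd (d2eal_state l f y Om ea ew t))) i * exp (- ew * l (d2_fbar_next f t (d2eal_state l f y Om ea ew t) i) (y (t+1)))"
    and "snd (snd (snd (d2eal_state l f y Om ea ew (Suc t)))) i = d2_fhat_next f Om t (d2eal_state l f y Om ea ew t) i"
  by (simp_all add: Let_def split: prod.split)

lemma st_0: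
  fixes l :: "'a::real_vector \<Rightarrow> 'a \<Rightarrow> real"
  shows "fst (d2eal_state l f y Om ea ew 0) i = 1" "fst (snd (d2eal_state l f y Om ea ew 0)) i = 1" "fst (snd (snd (d2eal_state l f y Om ea ew 0))) i = 1"
    "snd (snd (snd (d2eal_state l f y Om ea ew 0))) i = f 1 i"
  by simp_all

lemma alpha_eq: "d2_alpha st i = fst st i / (fst st i + fst (snd st) i)"
  by (cases st) (auto simp: d2_alpha_def)

lemma fbar_eq: "d2_fbar_next f t st i = d2_alpha st i *\<^sub>R f (t+1) i + (1 - d2_alpha st i) *\<^sub>R snd (snd (snd st)) i"
  by (cases st) (auto simp: d2_fbar_next_def)

lemma w_eq: "d2_w Om t st i j = (if j \<in> Lam Om i t then fst (snd (snd st)) j / (\<Sum>j'\<in>Lam Om i t. fst (snd (snd st)) j') else 0)"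
  by (cases st) (auto simp: d2_w_def)


theorem theorem1:
  fixes N T :: nat
    and A Y :: "'a::euclidean_space set"
    and l :: "'a \<Rightarrow> 'a \<Rightarrow> real"
    and f :: "nat \<Rightarrow> nat \<Rightarrow> 'a" and y :: "nat \<Rightarrow> 'a"
    and Om :: "nat \<Rightarrow> nat \<Rightarrow> nat set"
    and eta_a eta_w L1 Delta_o :: real and delta :: "nat \<Rightarrow> real"
    and istar :: nat
  assumes N: "N \<ge> 1" and T: "T \<ge> 1"
    and eta: "eta_a > 0" "eta_w > 0"
    and convA: "convex A" and convY: "convex Y"
    and loss_range: "\<And>a b. a \<in> A \<Longrightarrow> b \<in> Y \<Longrightarrow> 0 \<le> l a b \<and> l a b \<le> 1"
    and loss_convex: "\<And>b. b \<in> Y \<Longrightarrow> convex_on A (\<lambda>a. l a b)"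
    and y_in: "\<And>t. y t \<in> Y"
    and f_in: "\<And>t i. t \<ge> 1 \<Longrightarrow> i < N \<Longrightarrow> f t i \<in> A"
    and graph_sub: "\<And>i t. i < N \<Longrightarrow> Om i t \<subseteq> {..<N}"
    and graph_irrefl: "\<And>i t. i \<notin> Om i t"
    and graph_sym: "\<And>i j t. i < N \<Longrightarrow> j < N \<Longrightarrow> j \<in> Om i t \<longleftrightarrow> i \<in> Om j t"
    and L1: "L1 \<ge> 0"
    and lip: "\<And>x1 x2 b. x1 \<in> A \<Longrightarrow> x2 \<in> A \<Longrightarrow> b \<in> Y \<Longrightarrow> \<bar>l x1 b - l x2 b\<bar> \<le> L1 * norm (x1 - x2)"
    and delta_nn: "\<And>t. t \<in> {1..T} \<Longrightarrow> delta t \<ge> 0"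
    and delta: "\<And>t i j. t \<in> {1..T} \<Longrightarrow> i < N \<Longrightarrow> j < N \<Longrightarrow> norm (f t i - f t j) \<le> delta t"
    and Delta: "Delta_o \<ge> (\<Sum>t=1..T. delta t)"
    and istar: "istar < N" "\<And>j. j < N \<Longrightarrow> cumL l f y T istar \<le> cumL l f y T j"
  shows "\<forall>i<N. cumLbar l f y Om eta_a eta_w T i - cumL l f y T istar
           \<le> eta_a * real T / 8 + ln 2 / eta_a + L1 * Delta_o"
proof -
  define S where "S = d2eal_state l f y Om eta_a eta_w"
  define ah where "ah t i = fst (S t) i" for t i
  define ah' where "ah' t i = fst (snd (S t)) i" for t i
  define wh where "wh t i = fst (snd (snd (S t))) i" for t i
  define fh where "fh t i = snd (snd (snd (S t))) i" for t i
  define al where "al t i = ah t i / (ah t i + ah' t i)" for t i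
  define fb where "fb t i = d2_fbar_next f t (S t) i" for t i
  have Sa: "ah (Suc t) i = ah t i * exp (- eta_a * l (f (t+1) i) (y (t+1)))" for t i
    unfolding ah_def S_def by (rule st_Suc(1))
  have Sa': "ah' (Suc t) i = ah' t i * exp (- eta_a * l (fh t i) (y (t+1)))" for t i
    unfolding ah'_def fh_def S_def by (rule st_Suc(2))
  have Sw: "wh (Suc t) i = wh t i * exp (- eta_w * l (fb t i) (y (t+1)))" for t i
    unfolding wh_def fb_def S_def by (rule st_Suc(3))
  have Sf: "fh (Suc t) i = (\<Sum>j\<in>Lam Om i t. d2_w Om t (S t) i j *\<^sub>R fb t j)" for t i
    unfolding fh_def fb_def S_def by (simp only: st_Suc(4) d2_fhat_next_def)
  have S0: "ah 0 i = 1" "ah' 0 i = 1" "wh 0 i = 1" "fh 0 i = f 1 i" for i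
    unfolding ah_def ah'_def wh_def fh_def S_def by (simp_all only: st_0)
  have fbe: "fb t i = al t i *\<^sub>R f (t+1) i + (1 - al t i) *\<^sub>R fh t i" for t i
    unfolding fb_def al_def ah_def ah'_def fh_def by (simp only: fbar_eq alpha_eq)
  have we: "d2_w Om t (S t) i j = (if j \<in> Lam Om i t then wh t j / (\<Sum>j'\<in>Lam Om i t. wh t j') else 0)" for t i j
    unfolding wh_def by (rule w_eq)
  have pos: "ah t i > 0 \<and> ah' t i > 0 \<and> wh t i > 0" for t i
    by (induction t) (simp_all add: S0 Sa Sa' Sw)
  have al01: "0 \<le> al t i \<and> al t i \<le> 1" for t i
    using pos[of t i] unfolding al_def by (auto simp: divide_simps)
  have LamN: "Lam Om i t \<subseteq> {..<N}" if "i < N" for i t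
    using graph_sub[OF that] that unfolding Lam_def by auto
  have inA: "\<forall>i<N. fh t i \<in> A" for t
  proof (induction t)
    case 0 then show ?case using f_in by (simp add: S0)
  next
    case (Suc t)
    show ?case
    proof (intro allI impI)
      fix i assume i: "i < N"
      have fin: "finite (Lam Om i t)" using LamN[OF i] finite_subset by blast
      have pw: "(\<Sum>j'\<in>Lam Om i t. wh t j') > 0"
        using pos fin by (intro sum_pos) (auto simp: Lam_def)
      show "fh (Suc t) i \<in> A" unfolding Sf
      proof (rule convex_sum[OF fin convA])
        show "(\<Sum>j\<in>Lam Om i t. d2_w Om t (S t) i j) = 1"
          using pw by (simp add: we sum_divide_distrib[symmetric])
        show "\<And>j. j \<in> Lam Om i t \<Longrightarrow> 0 \<le> d2_w Om t (S t) i j"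
          using pos pw by (simp add: we less_imp_le)
        fix j assume "j \<in> Lam Om i t"
        hence j: "j < N" using LamN[OF i] by auto
        show "fb t j \<in> A" unfolding fbe
          using convexD[OF convA f_in[of "t+1" j] Suc.IH[rule_format, OF j]] al01[of t j] j
          by simp
      qed
    qed
  qed
  show ?thesis
  proof (intro allI impI)
    fix i assume i: "i < N"
    define W where "W t = ah t i + ah' t i" for t
    define lb where "lb s = l (d2_fbar l f y Om eta_a eta_w s i) (y s)" for s
    have lbS: "lb (Suc t) = l (fb t i) (y (t+1))" for t
      unfolding lb_def d2_fbar_def fb_def S_def by simp
    have step: "W (Suc t) \<le> W t * exp (- eta_a * lb (Suc t) + eta_a^2/8)" for t
    proof -
      define x where "x = l (f (t+1) i) (y (t+1))"
      define z where "z = l (fh t i) (y (t+1))"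
      have fA: "f (t+1) i \<in> A" using f_in i by simp
      have hA: "fh t i \<in> A" using inA i by simp
      have x01: "0 \<le> x" "x \<le> 1" using loss_range[OF fA y_in] unfolding x_def by auto
      have z01: "0 \<le> z" "z \<le> 1" using loss_range[OF hA y_in] unfolding z_def by auto
      have Wp: "W t > 0" using pos[of t i] unfolding W_def by simp
      have eq: "W (Suc t) = W t * (al t i * exp (-eta_a*x) + (1 - al t i) * exp (-eta_a*z))"
      proof -
        have a1: "W t * al t i = ah t i" using Wp unfolding W_def al_def by simp
        have a2: "W t * (1 - al t i) = ah' t i" using Wp unfolding W_def al_def by (simp add: field_simps)
        show ?thesis unfolding W_def[of "Suc t"] Sa Sa' x_def[symmetric] z_def[symmetric]
          by (simp only: distrib_left mult.assoc[symmetric] a1 a2 Suc_eq_plus1)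
      qed
      have cv: "lb (Suc t) \<le> al t i * x + (1 - al t i) * z"
      proof -
        have "l ((1 - (1 - al t i)) *\<^sub>R f (t+1) i + (1 - al t i) *\<^sub>R fh t i) (y (t+1))
              \<le> (1 - (1 - al t i)) * l (f (t+1) i) (y (t+1)) + (1 - al t i) * l (fh t i) (y (t+1))"
          by (rule convex_onD[OF loss_convex[OF y_in]]) (use al01[of t i] fA hA in auto)
        thus ?thesis unfolding lbS fbe x_def z_def by simp
      qed
      have "W (Suc t) \<le> W t * exp (-eta_a*(al t i * x + (1 - al t i) * z) + eta_a^2/8)"
        unfolding eq using Wp hoeff2[of "al t i" x z eta_a] al01[of t i] x01 z01 eta(1)
        by (intro mult_left_mono) auto
      also have "\<dots> \<le> W t * exp (- eta_a * lb (Suc t) + eta_a^2/8)"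
        using Wp cv eta(1) by (intro mult_left_mono) (auto simp: mult_left_mono)
      finally show ?thesis .
    qed
    have Wb: "W t \<le> 2 * exp (- eta_a * (\<Sum>s=1..t. lb s) + real t * eta_a^2/8)" for t
    proof (induction t)
      case 0 then show ?case by (simp add: W_def S0)
    next
      case (Suc t)
      have "W (Suc t) \<le> W t * exp (- eta_a * lb (Suc t) + eta_a^2/8)" by (rule step)
      also have "\<dots> \<le> 2 * exp (- eta_a * (\<Sum>s=1..t. lb s) + real t * eta_a^2/8) * exp (- eta_a * lb (Suc t) + eta_a^2/8)"
        using Suc.IH by (intro mult_right_mono) auto
      also have "\<dots> = 2 * exp (- eta_a * (\<Sum>s=1..Suc t. lb s) + real (Suc t) * eta_a^2/8)"
      proof -
        have "2 * exp (- eta_a * (\<Sum>s=1..t. lb s) + real t * eta_a^2/8) * exp (- eta_a * lb (Suc t) + eta_a^2/8)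
           = 2 * exp ((- eta_a * (\<Sum>s=1..t. lb s) + real t * eta_a^2/8) + (- eta_a * lb (Suc t) + eta_a^2/8))"
          by (simp only: mult.assoc mult_exp_exp)
        also have "(- eta_a * (\<Sum>s=1..t. lb s) + real t * eta_a^2/8) + (- eta_a * lb (Suc t) + eta_a^2/8)
            = - eta_a * (\<Sum>s=1..Suc t. lb s) + real (Suc t) * eta_a^2/8"
          by (simp add: algebra_simps)
        finally show ?thesis .
      qed
      finally show ?case .
    qed
    have ahc: "ah t i = exp (- eta_a * (\<Sum>s=1..t. l (f s i) (y s)))" for t
    proof (induction t)
      case 0 then show ?case by (simp add: S0)
    next
      case (Suc t)
      have "ah (Suc t) i = exp (- eta_a * (\<Sum>s=1..t. l (f s i) (y s))) * exp (- eta_a * l (f (t+1) i) (y (t+1)))"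
        by (simp only: Sa Suc)
      also have "\<dots> = exp (- eta_a * (\<Sum>s=1..t. l (f s i) (y s)) + - eta_a * l (f (t+1) i) (y (t+1)))"
        by (simp only: mult_exp_exp)
      also have "- eta_a * (\<Sum>s=1..t. l (f s i) (y s)) + - eta_a * l (f (t+1) i) (y (t+1)) = - eta_a * (\<Sum>s=1..Suc t. l (f s i) (y s))"
        by (simp add: algebra_simps)
      finally show ?case .
    qed
    have "exp (- eta_a * cumL l f y T i) \<le> W T"
      using ahc[of T] pos[of T i] unfolding W_def cumL_def by simp
    also have "\<dots> \<le> 2 * exp (- eta_a * cumLbar l f y Om eta_a eta_w T i + real T * eta_a^2/8)"
      using Wb[of T] unfolding cumLbar_def lb_def by simp
    also have "2 * exp (- eta_a * cumLbar l f y Om eta_a eta_w T i + real T * eta_a^2/8)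
       = exp (ln 2 + (- eta_a * cumLbar l f y Om eta_a eta_w T i + real T * eta_a^2/8))"
      by (simp add: exp_add)
    finally have "- eta_a * cumL l f y T i \<le> ln 2 + (- eta_a * cumLbar l f y Om eta_a eta_w T i + real T * eta_a^2/8)"
      by (simp only: exp_le_cancel_iff)
    hence "eta_a * (cumLbar l f y Om eta_a eta_w T i - cumL l f y T i) \<le> eta_a * (eta_a * real T / 8 + ln 2 / eta_a)"
      using eta(1) by (simp add: algebra_simps power2_eq_square)
    hence hedge: "cumLbar l f y Om eta_a eta_w T i - cumL l f y T i \<le> eta_a * real T / 8 + ln 2 / eta_a"
      using eta(1) by (simp add: mult_le_cancel_left_pos)
    have "cumL l f y T i - cumL l f y T istar = (\<Sum>t=1..T. l (f t i) (y t) - l (f t istar) (y t))"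
      unfolding cumL_def by (simp add: sum_subtractf)
    also have "\<dots> \<le> (\<Sum>t=1..T. L1 * delta t)"
    proof (rule sum_mono)
      fix t assume t: "t \<in> {1..T}"
      have "l (f t i) (y t) - l (f t istar) (y t) \<le> L1 * norm (f t i - f t istar)"
      proof -
        have "\<bar>l (f t i) (y t) - l (f t istar) (y t)\<bar> \<le> L1 * norm (f t i - f t istar)"
          by (rule lip[OF f_in[of t i] f_in[of t istar] y_in]) (use t i istar(1) in auto)
        thus ?thesis by linarith
      qed
      also have "\<dots> \<le> L1 * delta t" using delta[OF t i istar(1)] L1 by (simp add: mult_left_mono)
      finally show "l (f t i) (y t) - l (f t istar) (y t) \<le> L1 * delta t" .
    qed
    also have "\<dots> \<le> L1 * Delta_o" using Delta L1 by (simp add: sum_distrib_left[symmetric] mult_left_mono)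
    finally show "cumLbar l f y Om eta_a eta_w T i - cumL l f y T istar
           \<le> eta_a * real T / 8 + ln 2 / eta_a + L1 * Delta_o" using hedge by simp
  qed
qed

end
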